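(* Let $N\ge2$, $\Omega=\mathbb{R}^{N-1}\times(0,\infty)$, $\psi\in L^\infty(\partial\Omega)$. With $v_{\delta,k}$, $w_\delta$, $U$ as in the context, for every $L>0$ and $T>0$, \[\lim_{\delta\to\infty}\sup_{(x,t)\in\Omega_L^c\times(0,T)}|v_{\delta,k}(x,t)-U(x)|=0\ \text{for every fixed }k>0,\qquad \lim_{\delta\to\infty}\sup_{(x,t)\in\Omega_L^c\times(0,T)}|w_\delta(x,t)-U(x)|=0,\] where $\Omega_L^c=\{x\in\overline\Omega:x_N>L\}$.
   Context: $x=(x',x_N)$, $\partial\Omega\cong\mathbb{R}^{N-1}$ with surface measure $d\sigma$. $\Gamma_d(x,t)=(4\pi t)^{-d/2}e^{-|x|^2/(4t)}$, $\partial_\xi\Gamma_1$ is the spatial derivative of $\Gamma_1$. $P(x)=c_Nx_N|x|^{-N}$, $c_N=\pi^{-N/2}\Gamma(N/2)$. $\Phi_{\delta,k}(x,y,t):=-2\int_0^\infty\Gamma_{N-1}(x'-y',\frac k\delta t+\tau)\partial_\xi\Gamma_1(x_N+y_N+\frac t\delta,\tau)d\tau$; $v_{\delta,k}(x,t)=\int_{\partial\Omega}\Phi_{\delta,k}(x,y,t)\psi(y)d\sigma(y)$; $w_\delta(x,t)=\int_{\partial\Omega}P(x'-y',x_N+t/\delta)\psi(y)d\sigma(y)$; $U(x)=\int_{\partial\Omega}P(x'-y',x_N)\psi(y)d\sigma(y)$ (the Poisson integral solving $-\Delta U=0$ in $\Omega$, $U=\psi$ on $\partial\Omega$). *)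

theory Defs
  imports "HOL-Analysis.Analysis"
begin

text \<open>Conventions: R^(N-1) is an arbitrary euclidean space 'a with N = DIM('a) + 1
  (so N >= 2 automatically). A point of Omega-bar is a pair (x', x_N) :: 'a * real,
  the boundary is identified with 'a (y = (y',0)) carrying Lebesgue measure lborel.\<close>

definition heat_kernel :: "nat \<Rightarrow> 'b::real_normed_vector \<Rightarrow> real \<Rightarrow> real" where
  "heat_kernel d z t = (4 * pi * t) powr (- real d / 2) * exp (- (norm z)\<^sup>2 / (4 * t))"

definition dheat1 :: "real \<Rightarrow> real \<Rightarrow> real" where
  "dheat1 \<xi> \<tau> = deriv (\<lambda>s. heat_kernel 1 s \<tau>) \<xi>"

definition Phi :: "real \<Rightarrow> real \<Rightarrow> 'a::euclidean_space \<times> real \<Rightarrow> 'a \<Rightarrow> real \<Rightarrow> real" where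
  "Phi \<delta> k x y' t = - 2 * (LINT \<tau>:{0<..}|lborel.
      heat_kernel DIM('a) (fst x - y') (k / \<delta> * t + \<tau>) * dheat1 (snd x + 0 + t / \<delta>) \<tau>)"

definition v_fun :: "real \<Rightarrow> real \<Rightarrow> ('a::euclidean_space \<Rightarrow> real) \<Rightarrow> 'a \<times> real \<Rightarrow> real \<Rightarrow> real" where
  "v_fun \<delta> k \<psi> x t = (LINT y'|lborel. Phi \<delta> k x y' t * \<psi> y')"

definition c_const :: "nat \<Rightarrow> real" where
  "c_const N = pi powr (- real N / 2) * Gamma (real N / 2)"

definition poisson :: "'a::euclidean_space \<times> real \<Rightarrow> real" where
  "poisson x = c_const (DIM('a) + 1) * snd x * norm x powr (- real (DIM('a) + 1))"

definition w_fun :: "real \<Rightarrow> ('a::euclidean_space \<Rightarrow> real) \<Rightarrow> 'a \<times> real \<Rightarrow> real \<Rightarrow> real" where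
  "w_fun \<delta> \<psi> x t = (LINT y'|lborel. poisson (fst x - y', snd x + t / \<delta>) * \<psi> y')"

definition U_fun :: "('a::euclidean_space \<Rightarrow> real) \<Rightarrow> 'a \<times> real \<Rightarrow> real" where
  "U_fun \<psi> x = (LINT y'|lborel. poisson (fst x - y', snd x) * \<psi> y')"

end

theory Submission
  imports Defs "HOL-Probability.Probability"
begin

lemma Iint_has:
  fixes p r :: real assumes p: "p > 0" and r: "r > 0"
  shows "((\<lambda>\<tau>. \<tau> powr (-p-1) * exp (-r/\<tau>)) has_integral Gamma p * r powr (-p)) {0<..}"
proof -
  define f where "f = (\<lambda>\<tau>::real. \<tau> powr (-p-1) * exp (-r/\<tau>))"
  have G: "((\<lambda>t. t powr (p - 1) / exp t) has_integral Gamma p) {0<..}"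
  proof -
    have "((\<lambda>t. t powr (p - 1) / exp t) has_integral Gamma p) {0..}" by (rule Gamma_integral_real[OF p])
    moreover have "negligible {x \<in> {0..} - {0<..}. (\<lambda>t::real. t powr (p - 1) / exp t) x \<noteq> 0}"
      by (rule negligible_subset[of "{0}"]) auto
    moreover have "negligible {x \<in> {0<..} - {0..}. (\<lambda>t::real. t powr (p - 1) / exp t) x \<noteq> 0}"
      by (rule negligible_subset[of "{}"]) auto
    ultimately show ?thesis by (intro iffD1[OF has_integral_spike_set_eq[of "{0..}" "{0<..}"]])
  qed
  have G2: "((\<lambda>u. \<bar>- r / u\<^sup>2\<bar> * f (r / u)) has_integral Gamma p * r powr (-p)) {0<..}"
  proof -
    have "((\<lambda>t. t powr (p - 1) / exp t * r powr (-p)) has_integral Gamma p * r powr (-p)) {0<..}"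
      using has_integral_mult_left[OF G] by simp
    then show ?thesis
    proof (rule has_integral_spike_eq[of "{}", THEN iffD1, rotated 2])
      fix u :: real assume "u \<in> {0<..} - {}"
      then have u: "u > 0" by simp
      have "\<bar>- r / u\<^sup>2\<bar> * f (r / u) = r / u^2 * ((r/u) powr (-p-1) * exp (-u))"
        using u r by (simp add: f_def)
      also have "(r/u) powr (-p-1) = r powr (-p-1) * u powr (p+1)"
      proof -
        have "u powr (p + 1) * u powr (- p - 1) = 1" using u by (simp flip: powr_add)
        then show ?thesis using u r by (simp add: powr_divide powr_minus divide_simps)
      qed
      finally show "\<bar>- r / u\<^sup>2\<bar> * f (r / u) = u powr (p - 1) / exp u * r powr (-p)"
        using u r by (simp add: powr_add powr_diff powr_minus exp_minus field_simps power2_eq_square)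
    qed auto
  qed
  have abs: "(\<lambda>u. \<bar>- r / u\<^sup>2\<bar> * f (r / u)) absolutely_integrable_on {0<..}"
    apply (rule nonnegative_absolutely_integrable_1)
    using G2 apply blast
    using r by (auto simp: f_def)
  have der: "((\<lambda>u. r / u) has_field_derivative (- r / u\<^sup>2)) (at u within {0<..})" if "u \<in> {0<..}" for u
    using that by (auto intro!: derivative_eq_intros simp: power2_eq_square field_simps)
  have inj: "inj_on (\<lambda>u. r / u) {0<..}" using r by (auto simp: inj_on_def field_simps)
  have img: "(\<lambda>u. r / u) ` {0<..} = {0<..}"
  proof
    show "(\<lambda>u. r / u) ` {0<..} \<subseteq> {0<..}" using r by auto
    show "{0<..} \<subseteq> (\<lambda>u. r / u) ` {0<..}"
    proof
      fix x :: real assume "x \<in> {0<..}"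
      then have "x = r / (r / x)" "r / x \<in> {0<..}" using r by auto
      then show "x \<in> (\<lambda>u. r / u) ` {0<..}" by blast
    qed
  qed
  have "f absolutely_integrable_on {0<..} \<and> integral {0<..} f = Gamma p * r powr (-p)"
    using has_absolute_integral_change_of_variables_1'[OF _ der inj, of f "Gamma p * r powr (-p)"] abs G2
    unfolding img by (auto simp: integral_unique)
  then have "(f has_integral Gamma p * r powr (-p)) {0<..}"
    by (metis absolutely_integrable_on_def has_integral_integral)
  then show ?thesis by (simp add: f_def)
qed

lemma Iint_nn:
  fixes p r C :: real assumes p: "p > 0" and r: "r > 0" and C: "C \<ge> 0"
  shows "(\<integral>\<^sup>+\<tau>. ennreal (C * (\<tau> powr (-p-1) * exp (-r/\<tau>))) * indicator {0<..} \<tau> \<partial>lborel)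
     = ennreal (C * (Gamma p * r powr (-p)))"
  apply (rule nn_integral_has_integral_lebesgue')
  using C apply simp
  by (rule has_integral_mult_right[OF Iint_has[OF p r]])

lemma gauss1:
  fixes \<tau> :: real assumes t: "\<tau> > 0"
  shows "(\<integral>\<^sup>+y. ennreal ((4*pi*\<tau>) powr (-1/2) * exp (-(y\<^sup>2) / (4*\<tau>))) \<partial>lborel) = 1"
proof -
  have eq: "(4*pi*\<tau>) powr (-1/2) * exp (-(y\<^sup>2) / (4*\<tau>)) = normal_density 0 (sqrt (2*\<tau>)) y" for y
  proof -
    have s2: "(sqrt (2*\<tau>))\<^sup>2 = 2*\<tau>" using t by simp
    have "(4*pi*\<tau>) powr (-1/2) = 1 / (4*pi*\<tau>) powr (1/2)"
      by (simp add: powr_minus_divide[symmetric])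
    also have "\<dots> = 1 / sqrt (4*pi*\<tau>)" using t by (simp add: powr_half_sqrt)
    finally have "(4*pi*\<tau>) powr (-1/2) = 1 / sqrt (2 * pi * (sqrt (2*\<tau>))\<^sup>2)"
      unfolding s2 by simp
    then show ?thesis using t by (simp add: normal_density_def)
  qed
  have "(\<integral>\<^sup>+y. ennreal (normal_density 0 (sqrt (2*\<tau>)) y) \<partial>lborel) = ennreal (\<integral>y. normal_density 0 (sqrt (2*\<tau>)) y \<partial>lborel)"
    by (rule nn_integral_eq_integral) (use t in \<open>auto intro!: integrable_normal_density\<close>)
  then show ?thesis unfolding eq using t by (simp add: integral_normal_density)
qed

lemma gaussd:
  fixes \<tau> :: real assumes t: "\<tau> > 0"
  shows "(\<integral>\<^sup>+z. ennreal (heat_kernel DIM('a) (z::'a::euclidean_space) \<tau>) \<partial>lborel) = 1"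
proof -
  define f where "f = (\<lambda>(b::'a) y. ennreal ((4*pi*\<tau>) powr (-1/2) * exp (-(y\<^sup>2) / (4*\<tau>))))"
  have eq: "ennreal (heat_kernel DIM('a) (z::'a) \<tau>) = (\<Prod>b\<in>Basis. f b (z \<bullet> b))" for z
  proof -
    have n: "(norm z)\<^sup>2 = (\<Sum>b\<in>Basis. (z \<bullet> b)\<^sup>2)"
    proof -
      have "(norm z)\<^sup>2 = z \<bullet> z" by (simp add: power2_norm_eq_inner)
      also have "\<dots> = (\<Sum>b\<in>Basis. (z \<bullet> b) * (z \<bullet> b))" by (rule euclidean_inner)
      finally show ?thesis by (simp add: power2_eq_square)
    qed
    have "(\<Prod>b\<in>(Basis::'a set). (4*pi*\<tau>) powr (-1/2) * exp (-((z \<bullet> b)\<^sup>2) / (4*\<tau>)))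
        = ((4*pi*\<tau>) powr (-1/2)) ^ DIM('a) * exp (\<Sum>b\<in>Basis. -((z \<bullet> b)\<^sup>2) / (4*\<tau>))"
      by (simp add: prod.distrib exp_sum)
    also have "((4*pi*\<tau>) powr (-1/2)) ^ DIM('a) = (4*pi*\<tau>) powr (- real DIM('a) / 2)"
      using t by (simp add: powr_power)
    also have "(\<Sum>b\<in>Basis. -((z \<bullet> b)\<^sup>2) / (4*\<tau>)) = - (norm z)\<^sup>2 / (4 * \<tau>)"
      unfolding n by (simp add: sum_divide_distrib sum_negf)
    finally show ?thesis
      by (simp add: f_def heat_kernel_def prod_ennreal)
  qed
  have "(\<integral>\<^sup>+z. (\<Prod>b\<in>Basis. f b ((z::'a) \<bullet> b)) \<partial>lborel) = (\<Prod>b\<in>(Basis::'a set). \<integral>\<^sup>+y. f b y \<partial>lborel)"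
    by (rule nn_integral_lborel_prod) (auto simp: f_def)
  also have "\<dots> = 1" using gauss1[OF t] by (simp add: f_def)
  finally show ?thesis unfolding eq .
qed


lemma dheat1_eq:
  assumes t: "\<tau> > 0"
  shows "dheat1 \<xi> \<tau> = - (\<xi> / (2*\<tau>)) * heat_kernel 1 \<xi> \<tau>"
proof -
  have f: "(\<lambda>s::real. heat_kernel 1 s \<tau>) = (\<lambda>s. (4*pi*\<tau>) powr (-1/2) * exp (- s\<^sup>2 / (4*\<tau>)))"
    by (simp add: heat_kernel_def fun_eq_iff)
  have "((\<lambda>s. (4*pi*\<tau>) powr (-1/2) * exp (- s\<^sup>2 / (4*\<tau>))) has_real_derivative
      (4*pi*\<tau>) powr (-1/2) * (exp (- \<xi>\<^sup>2 / (4*\<tau>)) * (- (2 * \<xi>) / (4*\<tau>)))) (at \<xi>)"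
    using t by (auto intro!: derivative_eq_intros simp: power2_eq_square field_simps)
  then have "dheat1 \<xi> \<tau> = (4*pi*\<tau>) powr (-1/2) * (exp (- \<xi>\<^sup>2 / (4*\<tau>)) * (- (2 * \<xi>) / (4*\<tau>)))"
    unfolding dheat1_def f by (rule DERIV_imp_deriv)
  then show ?thesis using t by (simp add: heat_kernel_def field_simps)
qed

definition gk :: "real \<Rightarrow> real \<Rightarrow> real" where
  "gk \<xi> \<tau> = \<xi> / \<tau> * heat_kernel 1 \<xi> \<tau>"

lemma heat_kernel_nonneg: "heat_kernel d z \<tau> \<ge> 0"
  by (simp add: heat_kernel_def)

lemma gk_nonneg: "\<xi> \<ge> 0 \<Longrightarrow> \<tau> \<ge> 0 \<Longrightarrow> gk \<xi> \<tau> \<ge> 0"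
  by (simp add: gk_def heat_kernel_nonneg)

lemma powr_div_self: "(\<tau>::real) > 0 \<Longrightarrow> \<tau> powr a / \<tau> = \<tau> powr (a - 1)"
  by (simp add: powr_diff)

lemma gk_form:
  assumes t: "\<tau> > 0"
  shows "gk \<xi> \<tau> = \<xi> * (4*pi) powr (-1/2) * (\<tau> powr (-(1/2)-1) * exp (-(\<xi>\<^sup>2/4)/\<tau>))"
proof -
  have "(4*pi*\<tau>) powr (-1/2) = (4*pi) powr (-1/2) * \<tau> powr (-1/2)"
    using t by (simp add: powr_mult)
  moreover have "\<tau> powr (-1/2) / \<tau> = \<tau> powr (-(1/2)-1)" using powr_div_self[OF t] by simp
  ultimately show ?thesis using t
    by (simp add: gk_def heat_kernel_def field_simps)
qed

lemma gk_over_form: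
  assumes t: "\<tau> > 0"
  shows "gk \<xi> \<tau> / \<tau> = \<xi> * (4*pi) powr (-1/2) * (\<tau> powr (-(3/2)-1) * exp (-(\<xi>\<^sup>2/4)/\<tau>))"
proof -
  have "\<tau> powr (-(1/2)-1) / \<tau> = \<tau> powr (-(3/2)-1)" using powr_div_self[OF t] by simp
  moreover have "gk \<xi> \<tau> / \<tau> = \<xi> * (4*pi) powr (-1/2) * (\<tau> powr (-(1/2)-1) / \<tau> * exp (-(\<xi>\<^sup>2/4)/\<tau>))"
    unfolding gk_form[OF t] by simp
  ultimately show ?thesis by simp
qed

lemma gk_heat_form:
  assumes t: "\<tau> > 0"
  shows "gk \<xi> \<tau> * heat_kernel d z \<tau> = \<xi> * (4*pi) powr (-((real d + 1)/2)) *
     (\<tau> powr (-((real d + 1)/2)-1) * exp (-((\<xi>\<^sup>2 + (norm z)\<^sup>2)/4)/\<tau>))"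
proof -
  have "(4*pi*\<tau>) powr (- real d/2) = (4*pi) powr (- real d/2) * \<tau> powr (- real d/2)"
    using t by (simp add: powr_mult)
  moreover have "(4*pi) powr (-1/2) * (4*pi) powr (- real d/2) = (4*pi) powr (-((real d + 1)/2))"
  proof -
    have e: "-1/2 + - real d/2 = -((real d + 1)/2)" by (simp add: field_simps)
    have "(4*pi) powr (-1/2) * (4*pi) powr (- real d/2) = (4*pi) powr (-1/2 + - real d/2)"
      by (simp only: powr_add)
    then show ?thesis unfolding e .
  qed
  moreover have "\<tau> powr (-(1/2)-1) * \<tau> powr (- real d/2) = \<tau> powr (-((real d + 1)/2)-1)"
  proof -
    have e: "(-(1/2)-1) + - real d/2 = -((real d + 1)/2)-1" by (simp add: field_simps)
    have "\<tau> powr (-(1/2)-1) * \<tau> powr (- real d/2) = \<tau> powr ((-(1/2)-1) + - real d/2)"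
      by (simp only: powr_add)
    then show ?thesis unfolding e .
  qed
  moreover have "exp (-(\<xi>\<^sup>2/4)/\<tau>) * exp (- (norm z)\<^sup>2 / (4*\<tau>)) = exp (-((\<xi>\<^sup>2 + (norm z)\<^sup>2)/4)/\<tau>)"
    by (simp add: exp_add[symmetric] add_divide_distrib diff_divide_distrib)
  ultimately show ?thesis unfolding gk_form[OF t]
    by (simp add: heat_kernel_def algebra_simps)
qed


lemma powr_mhalf: "(x::real) > 0 \<Longrightarrow> x powr (-(1/2)) = 1 / sqrt x"
  by (simp add: powr_minus_divide powr_half_sqrt)

lemma gk_int:
  assumes xi: "\<xi> > 0"
  shows "(\<integral>\<^sup>+\<tau>. ennreal (gk \<xi> \<tau>) * indicator {0<..} \<tau> \<partial>lborel) = 1"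
proof -
  have "(\<integral>\<^sup>+\<tau>. ennreal (gk \<xi> \<tau>) * indicator {0<..} \<tau> \<partial>lborel) =
     (\<integral>\<^sup>+\<tau>. ennreal ((\<xi> * (4*pi) powr (-1/2)) * (\<tau> powr (-(1/2)-1) * exp (-(\<xi>\<^sup>2/4)/\<tau>))) * indicator {0<..} \<tau> \<partial>lborel)"
    by (intro nn_integral_cong) (auto simp: gk_form split: split_indicator)
  also have "\<dots> = ennreal ((\<xi> * (4*pi) powr (-1/2)) * (Gamma (1/2) * (\<xi>\<^sup>2/4) powr (-(1/2))))"
    by (rule Iint_nn) (use xi in auto)
  also have "(\<xi> * (4*pi) powr (-1/2)) * (Gamma (1/2) * (\<xi>\<^sup>2/4) powr (-(1/2))) = 1"
  proof -
    have a: "(4*pi) powr (-1/2) = 1 / (2 * sqrt pi)" using powr_mhalf[of "4*pi"] by (simp add: real_sqrt_mult)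
    have b: "(\<xi>\<^sup>2/4) powr (-(1/2)) = 2 / \<xi>" using powr_mhalf[of "\<xi>\<^sup>2/4"] xi by (simp add: real_sqrt_divide)
    show ?thesis unfolding a b using xi by (simp add: Gamma_one_half_real)
  qed
  finally show ?thesis by simp
qed

lemma gk_over_int:
  assumes xi: "\<xi> > 0"
  shows "(\<integral>\<^sup>+\<tau>. ennreal (gk \<xi> \<tau> / \<tau>) * indicator {0<..} \<tau> \<partial>lborel) = ennreal (2 / \<xi>\<^sup>2)"
proof -
  have "(\<integral>\<^sup>+\<tau>. ennreal (gk \<xi> \<tau> / \<tau>) * indicator {0<..} \<tau> \<partial>lborel) =
     (\<integral>\<^sup>+\<tau>. ennreal ((\<xi> * (4*pi) powr (-1/2)) * (\<tau> powr (-(3/2)-1) * exp (-(\<xi>\<^sup>2/4)/\<tau>))) * indicator {0<..} \<tau> \<partial>lborel)"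
    by (intro nn_integral_cong) (auto simp: gk_over_form split: split_indicator)
  also have "\<dots> = ennreal ((\<xi> * (4*pi) powr (-1/2)) * (Gamma (3/2) * (\<xi>\<^sup>2/4) powr (-(3/2))))"
    by (rule Iint_nn) (use xi in auto)
  also have "(\<xi> * (4*pi) powr (-1/2)) * (Gamma (3/2) * (\<xi>\<^sup>2/4) powr (-(3/2))) = 2 / \<xi>\<^sup>2"
  proof -
    have a: "(4*pi) powr (-1/2) = 1 / (2 * sqrt pi)" using powr_mhalf[of "4*pi"] by (simp add: real_sqrt_mult)
    have b0: "(\<xi>\<^sup>2/4) powr (-(1/2)) = 2 / \<xi>" using powr_mhalf[of "\<xi>\<^sup>2/4"] xi by (simp add: real_sqrt_divide)
    have e: "-(3/2) = -(1/2) + (-1::real)" by simp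
    have "(\<xi>\<^sup>2/4) powr (-(3/2)) = (\<xi>\<^sup>2/4) powr (-(1/2)) * (\<xi>\<^sup>2/4) powr (-1)"
      unfolding e by (simp only: powr_add)
    also have "\<dots> = (2 / \<xi>) * (4 / \<xi>\<^sup>2)" unfolding b0 using xi by (simp add: powr_minus_divide)
    finally have b: "(\<xi>\<^sup>2/4) powr (-(3/2)) = (2 / \<xi>) * (4 / \<xi>\<^sup>2)" .
    have g: "Gamma (3/2::real) = sqrt pi / 2"
      using Gamma_plus1[of "1/2::real"] nonpos_Ints_nonpos[of "1/2::real"] by (auto simp: Gamma_one_half_real)
    show ?thesis unfolding a b g using xi by (simp add: field_simps power2_eq_square)
  qed
  finally show ?thesis by simp
qed

lemma gk_heat_int:
  assumes xi: "\<xi> > 0"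
  shows "(\<integral>\<^sup>+\<tau>. ennreal (gk \<xi> \<tau> * heat_kernel DIM('a) (z::'a::euclidean_space) \<tau>) * indicator {0<..} \<tau> \<partial>lborel)
     = ennreal (poisson (z, \<xi>))"
proof -
  define d where "d = DIM('a)"
  define p where "p = (real d + 1) / 2"
  define r where "r = (\<xi>\<^sup>2 + (norm z)\<^sup>2) / 4"
  have p: "p > 0" and r: "r > 0" using xi by (auto simp: p_def r_def add_pos_nonneg)
  have "(\<integral>\<^sup>+\<tau>. ennreal (gk \<xi> \<tau> * heat_kernel DIM('a) z \<tau>) * indicator {0<..} \<tau> \<partial>lborel) =
     (\<integral>\<^sup>+\<tau>. ennreal ((\<xi> * (4*pi) powr (-p)) * (\<tau> powr (-p-1) * exp (-r/\<tau>))) * indicator {0<..} \<tau> \<partial>lborel)"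
    by (intro nn_integral_cong) (auto simp: gk_heat_form p_def r_def d_def split: split_indicator)
  also have "\<dots> = ennreal ((\<xi> * (4*pi) powr (-p)) * (Gamma p * r powr (-p)))"
    by (rule Iint_nn[OF p r]) (use xi in auto)
  also have "(\<xi> * (4*pi) powr (-p)) * (Gamma p * r powr (-p)) = poisson (z, \<xi>)"
  proof -
    have "(4*pi) powr (-p) * r powr (-p) = (4*pi*r) powr (-p)" using r by (simp add: powr_mult)
    also have "4*pi*r = pi * ((norm z)\<^sup>2 + \<xi>\<^sup>2)" by (simp add: r_def)
    also have "(pi * ((norm z)\<^sup>2 + \<xi>\<^sup>2)) powr (-p) = pi powr (-p) * ((norm z)\<^sup>2 + \<xi>\<^sup>2) powr (-p)"
      by (simp add: powr_mult)
    finally have e1: "(4*pi) powr (-p) * r powr (-p) = pi powr (-p) * ((norm z)\<^sup>2 + \<xi>\<^sup>2) powr (-p)" .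
    have "norm (z, \<xi>) powr (- real (d + 1)) = (((norm z)\<^sup>2 + \<xi>\<^sup>2) powr (1/2)) powr (- real (d + 1))"
      by (simp add: norm_Pair powr_half_sqrt add_nonneg_nonneg)
    also have "\<dots> = ((norm z)\<^sup>2 + \<xi>\<^sup>2) powr ((1/2) * (- real (d + 1)))" by (simp only: powr_powr)
    also have "(1/2) * (- real (d + 1)) = -p" unfolding p_def by (simp add: field_simps)
    finally have e2: "norm (z, \<xi>) powr (- real (d + 1)) = ((norm z)\<^sup>2 + \<xi>\<^sup>2) powr (-p)" .
    have "(\<xi> * (4*pi) powr (-p)) * (Gamma p * r powr (-p)) = \<xi> * Gamma p * ((4*pi) powr (-p) * r powr (-p))"
      by simp
    also have "\<dots> = c_const (d+1) * \<xi> * norm (z, \<xi>) powr (- real (d + 1))"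
    proof -
      have e3: "- real (d+1) / 2 = -p" "real (d+1) / 2 = p" by (simp_all add: p_def field_simps)
      have "c_const (d+1) = pi powr (-p) * Gamma p" unfolding c_const_def e3 ..
      then show ?thesis unfolding e1 e2 by simp
    qed
    finally show ?thesis by (simp add: poisson_def d_def)
  qed
  finally show ?thesis .
qed


definition Kf :: "real \<Rightarrow> real \<Rightarrow> 'a::euclidean_space \<Rightarrow> real" where
  "Kf s \<xi> z = (LINT \<tau>:{0<..}|lborel. gk \<xi> \<tau> * heat_kernel DIM('a) z (s + \<tau>))"

lemma heat_kernel_le0:
  assumes s: "s \<ge> 0" and t: "\<tau> > 0"
  shows "heat_kernel d (z::'a::real_normed_vector) (s + \<tau>) \<le> heat_kernel d (0::'a) \<tau>"
proof -
  have "(4*pi*(s+\<tau>)) powr (- real d / 2) \<le> (4*pi*\<tau>) powr (- real d / 2)"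
    by (rule powr_mono2') (use s t in auto)
  moreover have "exp (- (norm z)\<^sup>2 / (4 * (s+\<tau>))) \<le> 1" using s t by auto
  ultimately have "(4*pi*(s+\<tau>)) powr (- real d / 2) * exp (- (norm z)\<^sup>2 / (4 * (s+\<tau>))) \<le> (4*pi*\<tau>) powr (- real d / 2) * 1"
    by (intro mult_mono) auto
  then show ?thesis by (simp add: heat_kernel_def)
qed

lemma meas_gkh[measurable]:
  "(\<lambda>p. gk (f p) (g p) * heat_kernel d (h p) (k p)) \<in> borel_measurable M"
  if [measurable]: "f \<in> borel_measurable M" "g \<in> borel_measurable M" "h \<in> borel_measurable M" "k \<in> borel_measurable M"
  for f g k :: "_ \<Rightarrow> real" and h :: "_ \<Rightarrow> 'a::euclidean_space"
  unfolding gk_def heat_kernel_def by measurable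

lemma meas_heat[measurable]:
  "(\<lambda>p. heat_kernel d (h p) (k p)) \<in> borel_measurable M"
  if [measurable]: "h \<in> borel_measurable M" "k \<in> borel_measurable M"
  for k :: "_ \<Rightarrow> real" and h :: "_ \<Rightarrow> 'a::euclidean_space"
  unfolding heat_kernel_def by measurable

lemma meas_gk[measurable]:
  "(\<lambda>p. gk (f p) (g p)) \<in> borel_measurable M"
  if [measurable]: "f \<in> borel_measurable M" "g \<in> borel_measurable M"
  for f g :: "_ \<Rightarrow> real"
  unfolding gk_def heat_kernel_def by measurable

lemma Kf_integrable:
  assumes s: "s \<ge> 0" and xi: "\<xi> > 0"
  shows "set_integrable lborel {0<..} (\<lambda>\<tau>. gk \<xi> \<tau> * heat_kernel DIM('a) (z::'a::euclidean_space) (s + \<tau>))"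
proof -
  have I0: "integrable lborel (\<lambda>\<tau>. gk \<xi> \<tau> * heat_kernel DIM('a) (0::'a) \<tau> * indicator {0<..} \<tau>)"
  proof (rule integrableI_nn_integral_finite)
    show "(\<integral>\<^sup>+\<tau>. ennreal (gk \<xi> \<tau> * heat_kernel DIM('a) (0::'a) \<tau> * indicator {0<..} \<tau>) \<partial>lborel) = ennreal (poisson ((0::'a), \<xi>))"
      unfolding gk_heat_int[OF xi, where z="0::'a", symmetric]
      by (intro nn_integral_cong) (simp split: split_indicator)
  qed (use xi in \<open>auto intro!: AE_I2 mult_nonneg_nonneg gk_nonneg heat_kernel_nonneg split: split_indicator\<close>)
  show ?thesis unfolding set_integrable_def
  proof (rule Bochner_Integration.integrable_bound[OF I0])
    show "AE \<tau> in lborel. norm (indicator {0<..} \<tau> *\<^sub>R (gk \<xi> \<tau> * heat_kernel DIM('a) z (s + \<tau>)))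
        \<le> norm (gk \<xi> \<tau> * heat_kernel DIM('a) (0::'a) \<tau> * indicator {0<..} \<tau>)"
    proof (rule AE_I2)
      fix \<tau> :: real
      show "norm (indicator {0<..} \<tau> *\<^sub>R (gk \<xi> \<tau> * heat_kernel DIM('a) z (s + \<tau>)))
        \<le> norm (gk \<xi> \<tau> * heat_kernel DIM('a) (0::'a) \<tau> * indicator {0<..} \<tau>)"
      proof (cases "\<tau> > 0")
        case True
        then have "gk \<xi> \<tau> * heat_kernel DIM('a) z (s + \<tau>) \<le> gk \<xi> \<tau> * heat_kernel DIM('a) (0::'a) \<tau>"
          using xi s by (intro mult_left_mono heat_kernel_le0 gk_nonneg) auto
        then show ?thesis using True xi
          by (simp add: gk_nonneg heat_kernel_nonneg abs_of_nonneg)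
      qed simp
    qed
  qed measurable
qed

lemma Kf_nn:
  assumes s: "s \<ge> 0" and xi: "\<xi> > 0"
  shows "ennreal (Kf s \<xi> (z::'a::euclidean_space)) =
    (\<integral>\<^sup>+\<tau>. ennreal (gk \<xi> \<tau> * heat_kernel DIM('a) z (s + \<tau>)) * indicator {0<..} \<tau> \<partial>lborel)"
proof -
  have "(\<integral>\<^sup>+\<tau>. ennreal (indicator {0<..} \<tau> *\<^sub>R (gk \<xi> \<tau> * heat_kernel DIM('a) z (s + \<tau>))) \<partial>lborel)
     = ennreal (\<integral>\<tau>. indicator {0<..} \<tau> *\<^sub>R (gk \<xi> \<tau> * heat_kernel DIM('a) z (s + \<tau>)) \<partial>lborel)"
    by (rule nn_integral_eq_integral)
      (use Kf_integrable[OF s xi, of z] s xi in \<open>auto simp: set_integrable_def intro!: AE_I2 mult_nonneg_nonneg gk_nonneg heat_kernel_nonneg split: split_indicator\<close>)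
  then show ?thesis unfolding Kf_def set_lebesgue_integral_def
    by (simp add: indicator_mult_ennreal mult.commute)
qed

lemma Kf_nonneg: "s \<ge> 0 \<Longrightarrow> \<xi> > 0 \<Longrightarrow> Kf s \<xi> z \<ge> 0"
  unfolding Kf_def set_lebesgue_integral_def
  by (intro Bochner_Integration.integral_nonneg) (auto intro!: mult_nonneg_nonneg gk_nonneg heat_kernel_nonneg split: split_indicator)

lemma Kf0: assumes xi: "\<xi> > 0" shows "Kf 0 \<xi> z = poisson (z, \<xi>)"
proof -
  have "ennreal (Kf 0 \<xi> z) = ennreal (poisson (z, \<xi>))"
    using Kf_nn[of 0 \<xi> z] gk_heat_int[OF xi, of z] xi by simp
  moreover have "poisson (z, \<xi>) \<ge> 0" using xi
    by (simp add: poisson_def c_const_def Gamma_real_pos)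
  ultimately show ?thesis using Kf_nonneg[of 0 \<xi> z] xi by simp
qed


lemma Kf_meas[measurable]: "Kf s \<xi> \<in> borel_measurable (lborel :: 'a::euclidean_space measure)"
  unfolding Kf_def[abs_def] set_lebesgue_integral_def by measurable

lemma Kf_total:
  assumes s: "s \<ge> 0" and xi: "\<xi> > 0"
  shows "(\<integral>\<^sup>+z. ennreal (Kf s \<xi> (z::'a::euclidean_space)) \<partial>lborel) = 1"
proof -
  have "(\<integral>\<^sup>+z. ennreal (Kf s \<xi> (z::'a)) \<partial>lborel) =
    (\<integral>\<^sup>+z. (\<integral>\<^sup>+\<tau>. ennreal (gk \<xi> \<tau> * heat_kernel DIM('a) (z::'a) (s + \<tau>)) * indicator {0<..} \<tau> \<partial>lborel) \<partial>lborel)"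
    by (intro nn_integral_cong) (rule Kf_nn[OF s xi])
  also have "\<dots> = (\<integral>\<^sup>+\<tau>. (\<integral>\<^sup>+z. ennreal (gk \<xi> \<tau> * heat_kernel DIM('a) (z::'a) (s + \<tau>)) * indicator {0<..} \<tau> \<partial>lborel) \<partial>lborel)"
    by (rule pair_sigma_finite.Fubini'[symmetric]) (unfold_locales, measurable)
  also have "\<dots> = (\<integral>\<^sup>+\<tau>. ennreal (gk \<xi> \<tau>) * indicator {0<..} \<tau> \<partial>lborel)"
  proof (intro nn_integral_cong)
    fix \<tau> :: real
    show "(\<integral>\<^sup>+z. ennreal (gk \<xi> \<tau> * heat_kernel DIM('a) (z::'a) (s + \<tau>)) * indicator {0<..} \<tau> \<partial>lborel)
       = ennreal (gk \<xi> \<tau>) * indicator {0<..} \<tau>"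
    proof (cases "\<tau> > 0")
      case True
      have "(\<integral>\<^sup>+z. ennreal (gk \<xi> \<tau> * heat_kernel DIM('a) (z::'a) (s + \<tau>)) * indicator {0<..} \<tau> \<partial>lborel)
         = (\<integral>\<^sup>+z. ennreal (gk \<xi> \<tau>) * ennreal (heat_kernel DIM('a) (z::'a) (s + \<tau>)) \<partial>lborel)"
        using True xi by (intro nn_integral_cong) (simp add: ennreal_mult gk_nonneg heat_kernel_nonneg)
      also have "\<dots> = ennreal (gk \<xi> \<tau>) * (\<integral>\<^sup>+z. ennreal (heat_kernel DIM('a) (z::'a) (s + \<tau>)) \<partial>lborel)"
        by (rule nn_integral_cmult) measurable
      also have "\<dots> = ennreal (gk \<xi> \<tau>)" using gaussd[of "s + \<tau>", where 'a='a] s True by simp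
      finally show ?thesis using True by simp
    qed simp
  qed
  also have "\<dots> = 1" by (rule gk_int[OF xi])
  finally show ?thesis .
qed

lemma nn_integral_reflect:
  fixes f :: "'a::euclidean_space \<Rightarrow> ennreal"
  assumes [measurable]: "f \<in> borel_measurable borel"
  shows "(\<integral>\<^sup>+y. f (x - y) \<partial>lborel) = (\<integral>\<^sup>+z. f z \<partial>lborel)"
proof -
  have e: "density (distr lborel borel (\<lambda>y. x + (-1::real) *\<^sub>R y)) (\<lambda>_. \<bar>-1::real\<bar> ^ DIM('a)) = (lborel :: 'a measure)"
    using lborel_affine[of "-1::real" x] by simp
  have "(\<integral>\<^sup>+z. f z \<partial>lborel) = (\<integral>\<^sup>+z. f z \<partial>(density (distr lborel borel (\<lambda>y. x + (-1::real) *\<^sub>R y)) (\<lambda>_. \<bar>-1::real\<bar> ^ DIM('a))))"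
    by (simp only: e)
  also have "\<dots> = (\<integral>\<^sup>+y. f (x - y) \<partial>lborel)"
    by (simp add: nn_integral_density nn_integral_distr)
  finally show ?thesis ..
qed


lemma nn_integral_diff_real:
  fixes u v :: "'b \<Rightarrow> real"
  assumes [measurable]: "u \<in> borel_measurable M" "v \<in> borel_measurable M"
    and v0: "\<And>x. 0 \<le> v x" and vu: "\<And>x. v x \<le> u x"
    and U: "(\<integral>\<^sup>+x. ennreal (u x) \<partial>M) = ennreal U" and V: "(\<integral>\<^sup>+x. ennreal (v x) \<partial>M) = ennreal V"
    and V0: "V \<ge> 0"
  shows "(\<integral>\<^sup>+x. ennreal (u x - v x) \<partial>M) = ennreal (U - V)"
proof -
  have "ennreal U = (\<integral>\<^sup>+x. ennreal (u x - v x) + ennreal (v x) \<partial>M)"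
    unfolding U[symmetric] using v0 vu by (intro nn_integral_cong) (simp add: ennreal_plus[symmetric] del: ennreal_plus)
  also have "\<dots> = (\<integral>\<^sup>+x. ennreal (u x - v x) \<partial>M) + ennreal V"
    unfolding V[symmetric] by (rule nn_integral_add) auto
  finally have "ennreal U = (\<integral>\<^sup>+x. ennreal (u x - v x) \<partial>M) + ennreal V" .
  then have "(\<integral>\<^sup>+x. ennreal (u x - v x) \<partial>M) = ennreal U - ennreal V"
    by (metis ennreal_add_diff_cancel_right ennreal_neq_top)
  then show ?thesis using V0 by (simp add: ennreal_minus)
qed

lemma gk_le:
  assumes t: "\<tau> > 0" and a: "a > 0" and ax: "a \<le> \<xi>"
  shows "gk \<xi> \<tau> \<le> (\<xi> / a) * gk a \<tau>"
proof -
  have "exp (- \<xi>\<^sup>2 / (4 * \<tau>)) \<le> exp (- a\<^sup>2 / (4 * \<tau>))"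
    using t a ax by (auto simp: divide_simps intro!: power_mono)
  then have "\<xi> / \<tau> * ((4*pi*\<tau>) powr (- 1 / 2)) * exp (- \<xi>\<^sup>2 / (4 * \<tau>)) \<le> \<xi> / \<tau> * ((4*pi*\<tau>) powr (- 1 / 2)) * exp (- a\<^sup>2 / (4 * \<tau>))"
    using t a ax by (intro mult_left_mono) auto
  then show ?thesis using a t by (simp add: gk_def heat_kernel_def field_simps)
qed

lemma heat_diff:
  assumes t: "\<tau> > 0" and s: "s \<ge> 0"
  shows "(\<integral>\<^sup>+z. ennreal \<bar>heat_kernel DIM('a) (z::'a::euclidean_space) (s + \<tau>) - heat_kernel DIM('a) z \<tau>\<bar> \<partial>lborel)
     \<le> ennreal (real DIM('a) * s / \<tau>)"
proof -
  define d where "d = DIM('a)"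
  define c where "c = exp ((real d / 2) * ln (\<tau> / (s + \<tau>)))"
  have st: "s + \<tau> > 0" using s t by simp
  have c0: "c > 0" by (simp add: c_def)
  have c1: "c \<le> 1" unfolding c_def using s t by (auto intro!: mult_nonneg_nonpos simp: ln_div)
  have lnb: "ln (\<tau> / (s + \<tau>)) \<ge> - (s / \<tau>)"
  proof -
    have "ln ((s + \<tau>) / \<tau>) \<le> (s + \<tau>) / \<tau> - 1" using st t by (intro ln_le_minus_one) auto
    also have "\<dots> = s / \<tau>" using t by (simp add: field_simps)
    finally show ?thesis using st t by (simp add: ln_div)
  qed
  have cb: "1 - c \<le> real d / 2 * (s / \<tau>)"
  proof -
    have "1 + (real d / 2) * ln (\<tau> / (s + \<tau>)) \<le> c" unfolding c_def by (rule exp_ge_add_one_self)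
    moreover have "(real d / 2) * ln (\<tau> / (s + \<tau>)) \<ge> (real d / 2) * (- (s / \<tau>))"
      using lnb by (intro mult_left_mono) auto
    ultimately show ?thesis by simp
  qed
  have pw: "c * (4*pi*\<tau>) powr (- real d / 2) = (4*pi*(s+\<tau>)) powr (- real d / 2)"
  proof -
    have l1: "ln (4*pi*(s+\<tau>)) = ln (4*pi) + ln (s+\<tau>)" using st by (simp add: ln_mult)
    have l2: "ln (4*pi*\<tau>) = ln (4*pi) + ln \<tau>" using t by (simp add: ln_mult)
    have l3: "ln (\<tau>/(s+\<tau>)) = ln \<tau> - ln (s+\<tau>)" using t st by (simp add: ln_div)
    have "c * (4*pi*\<tau>) powr (- real d / 2) = exp (real d / 2 * (ln \<tau> - ln (s+\<tau>)) + (- real d / 2) * (ln (4*pi) + ln \<tau>))"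
      unfolding c_def powr_def l2 l3 using t by (simp add: exp_add[symmetric])
    also have "real d / 2 * (ln \<tau> - ln (s+\<tau>)) + (- real d / 2) * (ln (4*pi) + ln \<tau>) = (- real d / 2) * (ln (4*pi) + ln (s+\<tau>))"
      by (simp add: algebra_simps)
    also have "exp \<dots> = (4*pi*(s+\<tau>)) powr (- real d / 2)"
      unfolding powr_def l1 using st by simp
    finally show ?thesis .
  qed
  have dom: "c * heat_kernel d z \<tau> \<le> heat_kernel d z (s + \<tau>)" for z :: 'a
  proof -
    have "exp (- (norm z)\<^sup>2 / (4 * \<tau>)) \<le> exp (- (norm z)\<^sup>2 / (4 * (s + \<tau>)))"
      using t st s by (auto simp: divide_simps intro!: mult_left_mono)
    then have "(4*pi*(s+\<tau>)) powr (- real d / 2) * exp (- (norm z)\<^sup>2 / (4 * \<tau>)) \<le> (4*pi*(s+\<tau>)) powr (- real d / 2) * exp (- (norm z)\<^sup>2 / (4 * (s + \<tau>)))"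
      by (intro mult_left_mono) auto
    then show ?thesis unfolding heat_kernel_def pw[symmetric] by (simp add: mult.assoc)
  qed
  have "(\<integral>\<^sup>+z. ennreal \<bar>heat_kernel d (z::'a) (s + \<tau>) - heat_kernel d z \<tau>\<bar> \<partial>lborel)
     \<le> (\<integral>\<^sup>+z. ennreal (heat_kernel d (z::'a) (s + \<tau>) - c * heat_kernel d z \<tau>) + ennreal ((1 - c) * heat_kernel d z \<tau>) \<partial>lborel)"
  proof (intro nn_integral_mono)
    fix z :: 'a
    have "\<bar>heat_kernel d z (s + \<tau>) - heat_kernel d z \<tau>\<bar> \<le> (heat_kernel d z (s + \<tau>) - c * heat_kernel d z \<tau>) + (1 - c) * heat_kernel d z \<tau>"
    proof -
      have "c * heat_kernel d z \<tau> \<le> 1 * heat_kernel d z \<tau>"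
        using c1 heat_kernel_nonneg[of d z \<tau>] by (intro mult_right_mono) auto
      then show ?thesis using dom[of z] by (auto simp: abs_le_iff algebra_simps)
    qed
    then show "ennreal \<bar>heat_kernel d z (s + \<tau>) - heat_kernel d z \<tau>\<bar> \<le> ennreal (heat_kernel d z (s + \<tau>) - c * heat_kernel d z \<tau>) + ennreal ((1 - c) * heat_kernel d z \<tau>)"
      using dom[of z] c1 heat_kernel_nonneg[of d z \<tau>] by (simp add: ennreal_plus[symmetric] del: ennreal_plus)
  qed
  also have "\<dots> = (\<integral>\<^sup>+z. ennreal (heat_kernel d (z::'a) (s + \<tau>) - c * heat_kernel d z \<tau>) \<partial>lborel) + (\<integral>\<^sup>+z. ennreal ((1 - c) * heat_kernel d (z::'a) \<tau>) \<partial>lborel)"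
    by (rule nn_integral_add) auto
  also have "(\<integral>\<^sup>+z. ennreal (heat_kernel d (z::'a) (s + \<tau>) - c * heat_kernel d z \<tau>) \<partial>lborel) = ennreal (1 - c)"
  proof (rule nn_integral_diff_real)
    show "(\<integral>\<^sup>+z. ennreal (heat_kernel d (z::'a) (s + \<tau>)) \<partial>lborel) = ennreal 1"
      using gaussd[OF st, where 'a='a] by (simp add: d_def)
    have "(\<integral>\<^sup>+z. ennreal (c * heat_kernel d (z::'a) \<tau>) \<partial>lborel) = ennreal c * (\<integral>\<^sup>+z. ennreal (heat_kernel d (z::'a) \<tau>) \<partial>lborel)"
      using c0 by (subst nn_integral_cmult[symmetric]) (auto simp: ennreal_mult heat_kernel_nonneg)
    then show "(\<integral>\<^sup>+z. ennreal (c * heat_kernel d (z::'a) \<tau>) \<partial>lborel) = ennreal c"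
      using gaussd[OF t, where 'a='a] by (simp add: d_def)
  qed (use c0 dom heat_kernel_nonneg in \<open>auto intro!: mult_nonneg_nonneg\<close>)
  also have "(\<integral>\<^sup>+z. ennreal ((1 - c) * heat_kernel d (z::'a) \<tau>) \<partial>lborel) = ennreal (1 - c)"
  proof -
    have "(\<integral>\<^sup>+z. ennreal ((1 - c) * heat_kernel d (z::'a) \<tau>) \<partial>lborel) = ennreal (1 - c) * (\<integral>\<^sup>+z. ennreal (heat_kernel d (z::'a) \<tau>) \<partial>lborel)"
      using c1 by (subst nn_integral_cmult[symmetric]) (auto simp: ennreal_mult heat_kernel_nonneg)
    then show ?thesis using gaussd[OF t, where 'a='a] by (simp add: d_def)
  qed
  also have "ennreal (1 - c) + ennreal (1 - c) = ennreal (2 * (1 - c))"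
    using c1 by (simp add: ennreal_plus[symmetric] del: ennreal_plus)
  also have "\<dots> \<le> ennreal (real d * s / \<tau>)"
    using cb by (intro ennreal_leI) (simp add: field_simps)
  finally show ?thesis by (simp add: d_def)
qed


lemma gk_int':
  assumes xi: "\<xi> > 0"
  shows "(\<integral>\<^sup>+\<tau>. ennreal (gk \<xi> \<tau> * indicator {0<..} \<tau>) \<partial>lborel) = 1"
  unfolding gk_int[OF xi, symmetric] by (intro nn_integral_cong) (simp split: split_indicator)

lemma gk_diff_int:
  assumes a: "a > 0" and ax: "a \<le> \<xi>"
  shows "(\<integral>\<^sup>+\<tau>. ennreal \<bar>gk \<xi> \<tau> - gk a \<tau>\<bar> * indicator {0<..} \<tau> \<partial>lborel) \<le> ennreal (2 * (\<xi> / a - 1))"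
proof -
  define C where "C = \<xi> / a"
  have C1: "C \<ge> 1" using a ax by (simp add: C_def)
  have xi: "\<xi> > 0" using a ax by simp
  have "(\<integral>\<^sup>+\<tau>. ennreal \<bar>gk \<xi> \<tau> - gk a \<tau>\<bar> * indicator {0<..} \<tau> \<partial>lborel)
     \<le> (\<integral>\<^sup>+\<tau>. ennreal (C * (gk a \<tau> * indicator {0<..} \<tau>) - gk \<xi> \<tau> * indicator {0<..} \<tau>)
          + ennreal ((C - 1) * (gk a \<tau> * indicator {0<..} \<tau>)) \<partial>lborel)"
  proof (intro nn_integral_mono)
    fix \<tau> :: real
    show "ennreal \<bar>gk \<xi> \<tau> - gk a \<tau>\<bar> * indicator {0<..} \<tau> \<le> ennreal (C * (gk a \<tau> * indicator {0<..} \<tau>) - gk \<xi> \<tau> * indicator {0<..} \<tau>)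
          + ennreal ((C - 1) * (gk a \<tau> * indicator {0<..} \<tau>))"
    proof (cases "\<tau> > 0")
      case True
      have le: "gk \<xi> \<tau> \<le> C * gk a \<tau>" using gk_le[OF True a ax] by (simp add: C_def)
      have g0: "gk a \<tau> \<ge> 0" "gk \<xi> \<tau> \<ge> 0" using True a xi by (auto intro: gk_nonneg)
      have "C * gk a \<tau> \<ge> 1 * gk a \<tau>" using C1 g0 by (intro mult_right_mono) auto
      then have "\<bar>gk \<xi> \<tau> - gk a \<tau>\<bar> \<le> (C * gk a \<tau> - gk \<xi> \<tau>) + (C - 1) * gk a \<tau>"
        using le g0 by (auto simp: abs_le_iff algebra_simps)
      moreover have "0 \<le> (C - 1) * gk a \<tau>" using C1 g0 by auto
      ultimately show ?thesis using True le
        by (simp add: ennreal_plus[symmetric] del: ennreal_plus)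
    qed simp
  qed
  also have "\<dots> = (\<integral>\<^sup>+\<tau>. ennreal (C * (gk a \<tau> * indicator {0<..} \<tau>) - gk \<xi> \<tau> * indicator {0<..} \<tau>) \<partial>lborel)
          + (\<integral>\<^sup>+\<tau>. ennreal ((C - 1) * (gk a \<tau> * indicator {0<..} \<tau>)) \<partial>lborel)"
    by (rule nn_integral_add) auto
  also have "(\<integral>\<^sup>+\<tau>. ennreal ((C - 1) * (gk a \<tau> * indicator {0<..} \<tau>)) \<partial>lborel) = ennreal (C - 1)"
  proof -
    have "(\<integral>\<^sup>+\<tau>. ennreal ((C - 1) * (gk a \<tau> * indicator {0<..} \<tau>)) \<partial>lborel)
       = ennreal (C - 1) * (\<integral>\<^sup>+\<tau>. ennreal (gk a \<tau> * indicator {0<..} \<tau>) \<partial>lborel)"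
      using C1 a by (subst nn_integral_cmult[symmetric]) (auto simp: ennreal_mult gk_nonneg split: split_indicator)
    then show ?thesis using gk_int'[OF a] by simp
  qed
  also have "(\<integral>\<^sup>+\<tau>. ennreal (C * (gk a \<tau> * indicator {0<..} \<tau>) - gk \<xi> \<tau> * indicator {0<..} \<tau>) \<partial>lborel) = ennreal (C - 1)"
  proof (rule nn_integral_diff_real)
    have "(\<integral>\<^sup>+\<tau>. ennreal (C * (gk a \<tau> * indicator {0<..} \<tau>)) \<partial>lborel)
       = ennreal C * (\<integral>\<^sup>+\<tau>. ennreal (gk a \<tau> * indicator {0<..} \<tau>) \<partial>lborel)"
      using C1 a by (subst nn_integral_cmult[symmetric]) (auto simp: ennreal_mult gk_nonneg split: split_indicator)
    then show "(\<integral>\<^sup>+\<tau>. ennreal (C * (gk a \<tau> * indicator {0<..} \<tau>)) \<partial>lborel) = ennreal C"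
      using gk_int'[OF a] by simp
    show "(\<integral>\<^sup>+\<tau>. ennreal (gk \<xi> \<tau> * indicator {0<..} \<tau>) \<partial>lborel) = ennreal 1"
      using gk_int'[OF xi] by simp
    fix \<tau> :: real
    show "0 \<le> gk \<xi> \<tau> * indicator {0<..} \<tau>" using xi by (auto simp: gk_nonneg split: split_indicator)
    show "gk \<xi> \<tau> * indicator {0<..} \<tau> \<le> C * (gk a \<tau> * indicator {0<..} \<tau>)"
      using gk_le[of \<tau> a \<xi>] a ax by (auto simp: C_def split: split_indicator)
  qed auto
  also have "ennreal (C - 1) + ennreal (C - 1) = ennreal (2 * (\<xi> / a - 1))"
    using C1 by (simp add: C_def ennreal_plus[symmetric] del: ennreal_plus)
  finally show ?thesis .
qed


lemma main_est:
  assumes s: "s \<ge> 0" and a: "a > 0" and ax: "a \<le> \<xi>"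
  shows "(\<integral>\<^sup>+z. ennreal \<bar>Kf s \<xi> z - Kf 0 a (z::'a::euclidean_space)\<bar> \<partial>lborel)
     \<le> ennreal (2*(\<xi>/a - 1) + real DIM('a) * s * (2/a\<^sup>2))"
proof -
  define d where "d = DIM('a)"
  have xi: "\<xi> > 0" using a ax by simp
  define H where "H = (\<lambda>(z::'a) \<tau>. \<bar>gk \<xi> \<tau> - gk a \<tau>\<bar> * heat_kernel d z (s+\<tau>)
      + gk a \<tau> * \<bar>heat_kernel d z (s+\<tau>) - heat_kernel d z \<tau>\<bar>)"
  have Hm[measurable]: "(\<lambda>(z, \<tau>). H z \<tau>) \<in> borel_measurable (lborel \<Otimes>\<^sub>M lborel)"
    unfolding H_def by measurable
  have step1: "ennreal \<bar>Kf s \<xi> z - Kf 0 a z\<bar> \<le> (\<integral>\<^sup>+\<tau>. ennreal (H z \<tau>) * indicator {0<..} \<tau> \<partial>lborel)" for z :: 'a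
  proof -
    let ?A = "\<lambda>\<tau>. gk \<xi> \<tau> * heat_kernel d z (s + \<tau>)"
    let ?B = "\<lambda>\<tau>. gk a \<tau> * heat_kernel d z (0 + \<tau>)"
    have iA: "set_integrable lborel {0<..} ?A" using Kf_integrable[OF s xi, of z] by (simp add: d_def)
    have iB: "set_integrable lborel {0<..} ?B" using Kf_integrable[of 0 a z] a by (simp add: d_def)
    have "Kf s \<xi> z - Kf 0 a z = (LINT \<tau>:{0<..}|lborel. ?A \<tau> - ?B \<tau>)"
      unfolding Kf_def d_def using set_integral_diff(2)[OF iA iB] by (simp add: d_def)
    also have "\<dots> = (\<integral>\<tau>. indicator {0<..} \<tau> *\<^sub>R (?A \<tau> - ?B \<tau>) \<partial>lborel)"
      by (simp add: set_lebesgue_integral_def)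
    finally have eq: "Kf s \<xi> z - Kf 0 a z = (\<integral>\<tau>. indicator {0<..} \<tau> *\<^sub>R (?A \<tau> - ?B \<tau>) \<partial>lborel)" .
    have int: "integrable lborel (\<lambda>\<tau>. indicator {0<..} \<tau> *\<^sub>R (?A \<tau> - ?B \<tau>))"
      using set_integral_diff(1)[OF iA iB] by (simp add: set_integrable_def)
    have "ennreal \<bar>Kf s \<xi> z - Kf 0 a z\<bar> \<le> (\<integral>\<^sup>+\<tau>. norm (indicator {0<..} \<tau> *\<^sub>R (?A \<tau> - ?B \<tau>)) \<partial>lborel)"
      unfolding eq using integral_norm_bound_ennreal[OF int] by simp
    also have "\<dots> \<le> (\<integral>\<^sup>+\<tau>. ennreal (H z \<tau>) * indicator {0<..} \<tau> \<partial>lborel)"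
    proof (intro nn_integral_mono)
      fix \<tau> :: real
      show "ennreal (norm (indicator {0<..} \<tau> *\<^sub>R (?A \<tau> - ?B \<tau>))) \<le> ennreal (H z \<tau>) * indicator {0<..} \<tau>"
      proof (cases "\<tau> > 0")
        case True
        have "?A \<tau> - ?B \<tau> = (gk \<xi> \<tau> - gk a \<tau>) * heat_kernel d z (s+\<tau>) + gk a \<tau> * (heat_kernel d z (s+\<tau>) - heat_kernel d z \<tau>)"
          by (simp add: algebra_simps)
        also have "\<bar>\<dots>\<bar> \<le> \<bar>(gk \<xi> \<tau> - gk a \<tau>) * heat_kernel d z (s+\<tau>)\<bar> + \<bar>gk a \<tau> * (heat_kernel d z (s+\<tau>) - heat_kernel d z \<tau>)\<bar>"
          by (rule abs_triangle_ineq)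
        also have "\<dots> = H z \<tau>"
          using True a by (simp add: H_def abs_mult heat_kernel_nonneg gk_nonneg)
        finally show ?thesis using True by (simp add: ennreal_leI)
      qed simp
    qed
    finally show ?thesis .
  qed
  have "(\<integral>\<^sup>+z. ennreal \<bar>Kf s \<xi> z - Kf 0 a (z::'a)\<bar> \<partial>lborel)
      \<le> (\<integral>\<^sup>+z. (\<integral>\<^sup>+\<tau>. ennreal (H z \<tau>) * indicator {0<..} \<tau> \<partial>lborel) \<partial>lborel)"
    by (intro nn_integral_mono step1)
  also have "\<dots> = (\<integral>\<^sup>+\<tau>. (\<integral>\<^sup>+z. ennreal (H z \<tau>) * indicator {0<..} \<tau> \<partial>lborel) \<partial>lborel)"
    by (rule pair_sigma_finite.Fubini'[symmetric]) (unfold_locales, measurable)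
  also have "\<dots> \<le> (\<integral>\<^sup>+\<tau>. ennreal \<bar>gk \<xi> \<tau> - gk a \<tau>\<bar> * indicator {0<..} \<tau>
        + ennreal (real d * s) * (ennreal (gk a \<tau> / \<tau>) * indicator {0<..} \<tau>) \<partial>lborel)"
  proof (intro nn_integral_mono)
    fix \<tau> :: real
    show "(\<integral>\<^sup>+z. ennreal (H z \<tau>) * indicator {0<..} \<tau> \<partial>lborel) \<le> ennreal \<bar>gk \<xi> \<tau> - gk a \<tau>\<bar> * indicator {0<..} \<tau>
        + ennreal (real d * s) * (ennreal (gk a \<tau> / \<tau>) * indicator {0<..} \<tau>)"
    proof (cases "\<tau> > 0")
      case True
      define X where "X = \<bar>gk \<xi> \<tau> - gk a \<tau>\<bar>"
      define Y where "Y = gk a \<tau>"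
      have X0: "X \<ge> 0" and Y0: "Y \<ge> 0" using True a by (auto simp: X_def Y_def gk_nonneg)
      have "(\<integral>\<^sup>+z. ennreal (H z \<tau>) * indicator {0<..} \<tau> \<partial>lborel)
         = (\<integral>\<^sup>+z. ennreal (X * heat_kernel d (z::'a) (s+\<tau>)) + ennreal (Y * \<bar>heat_kernel d z (s+\<tau>) - heat_kernel d z \<tau>\<bar>) \<partial>lborel)"
        using True X0 Y0 by (intro nn_integral_cong)
          (simp add: H_def X_def Y_def ennreal_plus[symmetric] heat_kernel_nonneg del: ennreal_plus)
      also have "\<dots> = (\<integral>\<^sup>+z. ennreal (X * heat_kernel d (z::'a) (s+\<tau>)) \<partial>lborel)
          + (\<integral>\<^sup>+z. ennreal (Y * \<bar>heat_kernel d (z::'a) (s+\<tau>) - heat_kernel d z \<tau>\<bar>) \<partial>lborel)"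
        by (rule nn_integral_add) auto
      also have "(\<integral>\<^sup>+z. ennreal (X * heat_kernel d (z::'a) (s+\<tau>)) \<partial>lborel) = ennreal X"
      proof -
        have "(\<integral>\<^sup>+z. ennreal (X * heat_kernel d (z::'a) (s+\<tau>)) \<partial>lborel) = ennreal X * (\<integral>\<^sup>+z. ennreal (heat_kernel d (z::'a) (s+\<tau>)) \<partial>lborel)"
          using X0 by (subst nn_integral_cmult[symmetric]) (auto simp: ennreal_mult heat_kernel_nonneg)
        then show ?thesis using gaussd[of "s+\<tau>", where 'a='a] s True by (simp add: d_def)
      qed
      also have "(\<integral>\<^sup>+z. ennreal (Y * \<bar>heat_kernel d (z::'a) (s+\<tau>) - heat_kernel d z \<tau>\<bar>) \<partial>lborel)
          = ennreal Y * (\<integral>\<^sup>+z. ennreal \<bar>heat_kernel d (z::'a) (s+\<tau>) - heat_kernel d z \<tau>\<bar> \<partial>lborel)"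
        using Y0 by (subst nn_integral_cmult[symmetric]) (auto simp: ennreal_mult)
      also have "\<dots> \<le> ennreal Y * ennreal (real d * s / \<tau>)"
        using heat_diff[OF True s, where 'a='a] by (intro mult_left_mono) (auto simp: d_def)
      also have "ennreal Y * ennreal (real d * s / \<tau>) = ennreal (real d * s) * ennreal (gk a \<tau> / \<tau>)"
        using Y0 True s by (simp add: ennreal_mult[symmetric] Y_def)
      finally show ?thesis using True by (simp add: X_def add_mono)
    qed simp
  qed
  also have "\<dots> = (\<integral>\<^sup>+\<tau>. ennreal \<bar>gk \<xi> \<tau> - gk a \<tau>\<bar> * indicator {0<..} \<tau> \<partial>lborel)
        + ennreal (real d * s) * (\<integral>\<^sup>+\<tau>. ennreal (gk a \<tau> / \<tau>) * indicator {0<..} \<tau> \<partial>lborel)"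
    by (subst nn_integral_add) (auto simp: nn_integral_cmult)
  also have "\<dots> \<le> ennreal (2 * (\<xi> / a - 1)) + ennreal (real d * s) * ennreal (2 / a\<^sup>2)"
    unfolding gk_over_int[OF a] by (intro add_mono gk_diff_int[OF a ax]) simp
  also have "ennreal (real d * s) * ennreal (2 / a\<^sup>2) = ennreal (real d * s * (2 / a\<^sup>2))"
    using s a by (simp add: ennreal_mult[symmetric])
  also have "ennreal (2 * (\<xi> / a - 1)) + ennreal (real d * s * (2 / a\<^sup>2)) = ennreal (2*(\<xi>/a - 1) + real DIM('a) * s * (2/a\<^sup>2))"
  proof -
    have "2 * (\<xi> / a - 1) \<ge> 0" using a ax by (simp add: field_simps)
    moreover have "real d * s * (2 / a\<^sup>2) \<ge> 0" using s by simp
    ultimately show ?thesis by (simp add: d_def ennreal_plus[symmetric] del: ennreal_plus)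
  qed
  finally show ?thesis .
qed


lemma Kf_shift_integrable:
  assumes s: "s \<ge> 0" and xi: "\<xi> > 0"
  shows "integrable lborel (\<lambda>y. Kf s \<xi> (x - y :: 'a::euclidean_space))"
proof (rule integrableI_nn_integral_finite)
  have m: "(\<lambda>z. ennreal (Kf s \<xi> (z::'a))) \<in> borel_measurable borel"
    using Kf_meas[of s \<xi>, where 'a='a] by (simp add: measurable_lborel1 measurable_lborel2)
  show "(\<integral>\<^sup>+y. ennreal (Kf s \<xi> (x - y)) \<partial>lborel) = ennreal 1"
    using nn_integral_reflect[OF m, of x] Kf_total[OF s xi, where 'a='a] by simp
qed (use s xi Kf_nonneg in auto)

lemma conv_est:
  fixes \<psi> :: "'a::euclidean_space \<Rightarrow> real"
  assumes \<psi>m[measurable]: "\<psi> \<in> borel_measurable lborel" and B: "AE y in lborel. \<bar>\<psi> y\<bar> \<le> B" and B0: "B \<ge> 0"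
    and s: "s \<ge> 0" and a: "a > 0" and ax: "a \<le> \<xi>"
  shows "\<bar>(LINT y|lborel. Kf s \<xi> (x - y) * \<psi> y) - (LINT y|lborel. Kf 0 a (x - y) * \<psi> y)\<bar>
     \<le> B * (2*(\<xi>/a - 1) + real DIM('a) * s * (2/a\<^sup>2))"
proof -
  have xi: "\<xi> > 0" using a ax by simp
  have "2 * (\<xi> / a - 1) \<ge> 0" using a ax by (simp add: field_simps)
  then have R0: "(2*(\<xi>/a - 1) + real DIM('a) * s * (2/a\<^sup>2)) \<ge> 0" using s by simp
  have iKp: "integrable lborel (\<lambda>y. Kf s' \<xi>' (x - y) * \<psi> y)" if "s' \<ge> 0" "\<xi>' > 0" for s' \<xi>'
  proof (rule Bochner_Integration.integrable_bound)
    show "integrable lborel (\<lambda>y. B * Kf s' \<xi>' (x - y))"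
      using Kf_shift_integrable[OF that, of x] by simp
    show "AE y in lborel. norm (Kf s' \<xi>' (x - y) * \<psi> y) \<le> norm (B * Kf s' \<xi>' (x - y))"
      using B
    proof eventually_elim
      case (elim y)
      have k: "Kf s' \<xi>' (x - y) \<ge> 0" using Kf_nonneg that by auto
      then have "Kf s' \<xi>' (x - y) * \<bar>\<psi> y\<bar> \<le> Kf s' \<xi>' (x - y) * B" using elim by (intro mult_left_mono) auto
      then show ?case using k B0 by (simp add: abs_mult mult.commute)
    qed
  qed measurable
  let ?D = "\<lambda>y. (Kf s \<xi> (x - y) - Kf 0 a (x - y)) * \<psi> y"
  have eq: "(LINT y|lborel. Kf s \<xi> (x - y) * \<psi> y) - (LINT y|lborel. Kf 0 a (x - y) * \<psi> y) = (LINT y|lborel. ?D y)"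
    using iKp[OF s xi] iKp[of 0 a] a by (simp add: left_diff_distrib)
  have iD: "integrable lborel ?D"
    using iKp[OF s xi] iKp[of 0 a] a by (simp add: left_diff_distrib)
  have "ennreal \<bar>LINT y|lborel. ?D y\<bar> \<le> (\<integral>\<^sup>+y. norm (?D y) \<partial>lborel)"
    using integral_norm_bound_ennreal[OF iD] by simp
  also have "\<dots> \<le> (\<integral>\<^sup>+y. ennreal B * ennreal \<bar>Kf s \<xi> (x - y) - Kf 0 a (x - y)\<bar> \<partial>lborel)"
  proof (rule nn_integral_mono_AE)
    show "AE y in lborel. ennreal (norm (?D y)) \<le> ennreal B * ennreal \<bar>Kf s \<xi> (x - y) - Kf 0 a (x - y)\<bar>"
      using B
    proof eventually_elim
      case (elim y)
      have "norm (?D y) \<le> B * \<bar>Kf s \<xi> (x - y) - Kf 0 a (x - y)\<bar>"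
        using elim mult_right_mono[OF elim, of "\<bar>Kf s \<xi> (x - y) - Kf 0 a (x - y)\<bar>"]
        by (simp add: abs_mult mult.commute)
      then show ?case using B0 by (simp add: ennreal_mult[symmetric] ennreal_leI)
    qed
  qed
  also have "\<dots> = ennreal B * (\<integral>\<^sup>+y. ennreal \<bar>Kf s \<xi> (x - y) - Kf 0 a (x - y)\<bar> \<partial>lborel)"
    by (rule nn_integral_cmult) measurable
  also have "(\<integral>\<^sup>+y. ennreal \<bar>Kf s \<xi> (x - y) - Kf 0 a (x - y)\<bar> \<partial>lborel) = (\<integral>\<^sup>+z. ennreal \<bar>Kf s \<xi> z - Kf 0 a (z::'a)\<bar> \<partial>lborel)"
  proof (rule nn_integral_reflect[of "\<lambda>z. ennreal \<bar>Kf s \<xi> z - Kf 0 a (z::'a)\<bar>"])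
    show "(\<lambda>z. ennreal \<bar>Kf s \<xi> z - Kf 0 a (z::'a)\<bar>) \<in> borel_measurable borel"
      using Kf_meas[of s \<xi>, where 'a='a] Kf_meas[of 0 a, where 'a='a]
      by (simp add: measurable_lborel1 measurable_lborel2)
  qed
  also have "ennreal B * \<dots> \<le> ennreal B * ennreal (2*(\<xi>/a - 1) + real DIM('a) * s * (2/a\<^sup>2))"
    by (intro mult_left_mono main_est[OF s a ax]) auto
  also have "\<dots> = ennreal (B * (2*(\<xi>/a - 1) + real DIM('a) * s * (2/a\<^sup>2)))"
    using B0 R0 by (simp add: ennreal_mult[symmetric])
  finally have "ennreal \<bar>LINT y|lborel. ?D y\<bar> \<le> ennreal (B * (2*(\<xi>/a - 1) + real DIM('a) * s * (2/a\<^sup>2)))" .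
  then show ?thesis unfolding eq
    using ennreal_le_iff[OF mult_nonneg_nonneg[OF B0 R0]] by blast
qed


lemma Phi_eq:
  "Phi \<delta> k x y' t = Kf (k / \<delta> * t) (snd x + t / \<delta>) (fst x - y' :: 'a::euclidean_space)"
proof -
  have "Phi \<delta> k x y' t = (LINT \<tau>:{0<..}|lborel. (- 2) * (heat_kernel DIM('a) (fst x - y') (k / \<delta> * t + \<tau>) * dheat1 (snd x + 0 + t / \<delta>) \<tau>))"
    unfolding Phi_def by (rule set_integral_mult_right[symmetric])
  also have "\<dots> = Kf (k / \<delta> * t) (snd x + t / \<delta>) (fst x - y')"
    unfolding Kf_def
    by (rule set_lebesgue_integral_cong) (auto simp: dheat1_eq gk_def field_simps)
  finally show ?thesis .
qed

lemma ulim_helper: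
  fixes f :: "real \<Rightarrow> 'p \<Rightarrow> real"
  assumes "\<And>\<delta> p. \<delta> > 0 \<Longrightarrow> p \<in> S \<Longrightarrow> \<bar>f \<delta> p - g p\<bar> \<le> M / \<delta>" and M: "M \<ge> 0"
  shows "uniform_limit S f g at_top"
  unfolding uniform_limit_iff
proof (intro allI impI)
  fix e :: real assume e: "e > 0"
  show "\<forall>\<^sub>F n in at_top. \<forall>x\<in>S. dist (f n x) (g x) < e"
    unfolding eventually_at_top_linorder
  proof (intro exI[of _ "M / e + 1"] allI impI ballI)
    fix \<delta> p assume d: "\<delta> \<ge> M / e + 1" and p: "p \<in> S"
    have Me: "M / e \<ge> 0" using M e by simp
    then have dpos: "\<delta> > 0" using d by simp
    have "M < e * \<delta>"
    proof -
      have "e * \<delta> \<ge> e * (M / e + 1)" using d e by (intro mult_left_mono) auto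
      also have "e * (M / e + 1) = M + e" using e by (simp add: field_simps)
      finally show ?thesis using e by simp
    qed
    then have "M / \<delta> < e" using dpos by (simp add: divide_simps mult.commute)
    then show "dist (f \<delta> p) (g p) < e" using assms(1)[OF dpos p] by (simp add: dist_real_def)
  qed
qed

lemma bound_arith:
  fixes L a t T \<delta> k D :: real
  assumes L: "L > 0" and a: "a > L" and t: "0 < t" "t < T" and d: "\<delta> > 0" and k: "k \<ge> 0" and D: "D \<ge> 0"
  shows "2*((a + t/\<delta>)/a - 1) + D * (k/\<delta>*t) * (2/a\<^sup>2) \<le> (2*T/L + 2*D*k*T/L\<^sup>2) / \<delta>"
proof -
  have a0: "a > 0" using L a by simp
  have e1: "(a + t/\<delta>)/a - 1 = t / (\<delta>*a)" using a0 d by (simp add: field_simps)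
  have b1: "t / (\<delta>*a) \<le> T / (\<delta>*L)"
    by (rule frac_le) (use t d L a in \<open>auto intro!: mult_left_mono mult_pos_pos\<close>)
  have e2: "(k/\<delta>*t) * (2/a\<^sup>2) = 2 * (k*t / (\<delta>*a\<^sup>2))" using a0 d by (simp add: field_simps)
  have "L\<^sup>2 \<le> a\<^sup>2" using L a by (intro power_mono) auto
  then have b2: "k*t / (\<delta>*a\<^sup>2) \<le> k*T / (\<delta>*L\<^sup>2)"
    by (intro frac_le) (use t d L a k in \<open>auto intro!: mult_left_mono mult_pos_pos\<close>)
  have "2*((a + t/\<delta>)/a - 1) + D * (k/\<delta>*t) * (2/a\<^sup>2) = 2 * (t / (\<delta>*a)) + D * (2 * (k*t / (\<delta>*a\<^sup>2)))"
    unfolding e1 mult.assoc[of D] e2 ..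
  also have "\<dots> \<le> 2 * (T / (\<delta>*L)) + D * (2 * (k*T / (\<delta>*L\<^sup>2)))"
    using b1 b2 D by (intro add_mono mult_left_mono) auto
  also have "\<dots> = (2*T/L + 2*D*k*T/L\<^sup>2) / \<delta>" using d L by (simp add: field_simps)
  finally show ?thesis .
qed

theorem theorem4p3:
  fixes \<psi> :: "'a::euclidean_space \<Rightarrow> real" and L T :: real
  assumes "\<psi> \<in> borel_measurable lborel"
    and "\<exists>B. AE y in lborel. \<bar>\<psi> y\<bar> \<le> B"
    and "L > 0" and "T > 0"
  shows "(\<forall>k>0. uniform_limit {(x, t). snd x > L \<and> 0 < t \<and> t < T}
            (\<lambda>\<delta> (x, t). v_fun \<delta> k \<psi> x t) (\<lambda>(x, t). U_fun \<psi> x) at_top)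
       \<and> uniform_limit {(x, t). snd x > L \<and> 0 < t \<and> t < T}
            (\<lambda>\<delta> (x, t). w_fun \<delta> \<psi> x t) (\<lambda>(x, t). U_fun \<psi> x) at_top"
proof -
  note \<psi>m = assms(1)
  obtain B0 where "AE y in lborel. \<bar>\<psi> y\<bar> \<le> B0" using assms(2) by blast
  define B where "B = max B0 0"
  have B: "AE y in lborel. \<bar>\<psi> y\<bar> \<le> B" using \<open>AE y in lborel. \<bar>\<psi> y\<bar> \<le> B0\<close>
    by eventually_elim (auto simp: B_def)
  have B0: "B \<ge> 0" by (simp add: B_def)
  have L: "L > 0" using assms(3) .
  define D where "D = real DIM('a)"
  have D: "D \<ge> 0" by (simp add: D_def)
  define S where "S = {(x :: 'a \<times> real, t :: real). snd x > L \<and> 0 < t \<and> t < T}"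
  have U_eq: "U_fun \<psi> x = (LINT y|lborel. Kf 0 (snd x) (fst x - y) * \<psi> y)" if "snd x > 0" for x :: "'a \<times> real"
    unfolding U_fun_def using Kf0[OF that, where 'a='a] by simp
  have gen: "\<bar>(LINT y|lborel. Kf (k/\<delta>*t) (snd x + t/\<delta>) (fst x - y) * \<psi> y) - U_fun \<psi> x\<bar>
       \<le> (B * (2*T/L + 2*D*k*T/L\<^sup>2)) / \<delta>"
    if d: "\<delta> > 0" and k: "k \<ge> 0" and xt: "(x, t) \<in> S" for \<delta> k x t
  proof -
    have a: "snd x > L" and t: "0 < t" "t < T" using xt by (auto simp: S_def)
    have a0: "snd x > 0" using a L by simp
    have s0: "k/\<delta>*t \<ge> 0" using k d t by simp
    have ax: "snd x \<le> snd x + t/\<delta>" using d t by simp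
    have "\<bar>(LINT y|lborel. Kf (k/\<delta>*t) (snd x + t/\<delta>) (fst x - y) * \<psi> y) - U_fun \<psi> x\<bar>
       \<le> B * (2*((snd x + t/\<delta>)/snd x - 1) + D * (k/\<delta>*t) * (2/(snd x)\<^sup>2))"
      unfolding U_eq[OF a0] D_def by (rule conv_est[OF \<psi>m B B0 s0 a0 ax])
    also have "\<dots> \<le> B * ((2*T/L + 2*D*k*T/L\<^sup>2) / \<delta>)"
      by (intro mult_left_mono bound_arith[OF L a t d k D] B0)
    finally show ?thesis by simp
  qed
  have part1: "uniform_limit S (\<lambda>\<delta> (x, t). v_fun \<delta> k \<psi> x t) (\<lambda>(x, t). U_fun \<psi> x) at_top" if k: "k > 0" for k
  proof (rule ulim_helper)
    fix \<delta> :: real and p assume d: "\<delta> > 0" and p: "p \<in> S"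
    obtain x t where pe: "p = (x, t)" by (cases p)
    have "v_fun \<delta> k \<psi> x t = (LINT y|lborel. Kf (k/\<delta>*t) (snd x + t/\<delta>) (fst x - y) * \<psi> y)"
      unfolding v_fun_def Phi_eq ..
    then show "\<bar>(case p of (x, t) \<Rightarrow> v_fun \<delta> k \<psi> x t) - (case p of (x, t) \<Rightarrow> U_fun \<psi> x)\<bar>
       \<le> (B * (2*T/L + 2*D*k*T/L\<^sup>2)) / \<delta>"
      using gen[of \<delta> k x t] d k p unfolding pe by simp
  qed (use B0 D L k assms(4) in auto)
  have part2: "uniform_limit S (\<lambda>\<delta> (x, t). w_fun \<delta> \<psi> x t) (\<lambda>(x, t). U_fun \<psi> x) at_top"
  proof (rule ulim_helper)
    fix \<delta> :: real and p assume d: "\<delta> > 0" and p: "p \<in> S"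
    obtain x t where pe: "p = (x, t)" by (cases p)
    have xi: "snd x + t/\<delta> > 0" using p d L unfolding pe S_def by (auto intro: add_pos_pos)
    have "w_fun \<delta> \<psi> x t = (LINT y|lborel. Kf (0/\<delta>*t) (snd x + t/\<delta>) (fst x - y) * \<psi> y)"
      unfolding w_fun_def using Kf0[OF xi, where 'a='a] by simp
    then show "\<bar>(case p of (x, t) \<Rightarrow> w_fun \<delta> \<psi> x t) - (case p of (x, t) \<Rightarrow> U_fun \<psi> x)\<bar>
       \<le> (B * (2*T/L + 2*D*0*T/L\<^sup>2)) / \<delta>"
      using gen[of \<delta> 0 x t] d p unfolding pe by simp
  qed (use B0 L assms(4) in auto)
  show ?thesis using part1 part2 unfolding S_def by blast
qed

end
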